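(* Let $n\in\mathbb N$, $\Lambda_n=\{0,\frac{1}{n}\pi,\dots,\frac{n-1}{n}\pi\}$, let $\underline\mu:\Lambda_n\to\mathbb N_0$ be any multiplicity function, $A=A(\Lambda_n,\underline\mu)$, $m=\max\{\mu_\alpha:\alpha\in\Lambda_n\}$, $\underline\kappa$ the constant function with value $m$ on $\Lambda_n$, $C=A(\Lambda_n,\underline\kappa)$, and $\Omega:=\operatorname{Hom}_C(A,C)$. Put $\nu_\alpha=m-\mu_\alpha$ for $\alpha\in\Lambda_n$. Then $\Omega\cong\{f\in C:\ f^{(0)}_\alpha=f^{(2)}_\alpha=\dots=f^{(2(\nu_\alpha-1))}_\alpha=0\ \text{for all }\alpha\in\Lambda_n\}$.
   Context: $R=\mathbb C[z_1,z_2]$; for a finite $\Pi\subset\mathbb C$ with pairwise differences not in $\pi\mathbb Z$ and $\underline\mu:\Pi\to\mathbb N_0$, $A(\Pi,\underline\mu)=\{f\in R:l_\alpha^{2\mu_\alpha+1}\mid f-s_\alpha(f)\ \forall\alpha\in\Pi\}$, where $l_\alpha=-\sin(\alpha)z_1+\cos(\alpha)z_2$ and $s_\alpha$ is the involution of $R$ induced by the reflection of $\mathbb C^2$ fixing $\{l_\alpha=0\}$. Polar coordinates $z_1=\rho\cos\varphi$, $z_2=\rho\sin\varphi$; $f^{(k)}_\alpha=\partial^k f/\partial\varphi^k|_{\varphi=\alpha}\in\mathbb C[\rho]$. (The conditions for $\alpha$ with $\nu_\alpha=0$ are empty.) *)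

theory Defs
  imports "HOL-Analysis.Analysis"
begin

text \<open>Polynomials in two complex variables z1, z2 are represented by their
  (polynomial) functions complex => complex => complex; since the field is infinite
  this identifies R = C[z1,z2] with the ring of polynomial functions.\<close>

type_synonym bipoly = "complex \<Rightarrow> complex \<Rightarrow> complex"

definition R2 :: "bipoly set" where
  "R2 = {f. \<exists>N (c :: nat \<Rightarrow> nat \<Rightarrow> complex).
              \<forall>z1 z2. f z1 z2 = (\<Sum>i\<le>N. \<Sum>j\<le>N. c i j * z1 ^ i * z2 ^ j)}"

definition lform :: "complex \<Rightarrow> bipoly" where
  "lform \<alpha> = (\<lambda>z1 z2. - sin \<alpha> * z1 + cos \<alpha> * z2)"

text \<open>s_alpha f = f o (reflection of C^2 fixing the line l_alpha = 0, i.e. the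
  line spanned by (cos alpha, sin alpha)).\<close>
definition srefl :: "complex \<Rightarrow> bipoly \<Rightarrow> bipoly" where
  "srefl \<alpha> f = (\<lambda>z1 z2.
     f (2 * (cos \<alpha> * z1 + sin \<alpha> * z2) * cos \<alpha> - z1)
       (2 * (cos \<alpha> * z1 + sin \<alpha> * z2) * sin \<alpha> - z2))"

definition pdvd_pow :: "bipoly \<Rightarrow> nat \<Rightarrow> bipoly \<Rightarrow> bool" where
  "pdvd_pow l k g \<longleftrightarrow> (\<exists>h\<in>R2. \<forall>z1 z2. g z1 z2 = (l z1 z2) ^ k * h z1 z2)"

definition algA :: "complex set \<Rightarrow> (complex \<Rightarrow> nat) \<Rightarrow> bipoly set" where
  "algA P \<mu> = {f \<in> R2. \<forall>\<alpha>\<in>P.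
      pdvd_pow (lform \<alpha>) (2 * \<mu> \<alpha> + 1) (\<lambda>z1 z2. f z1 z2 - srefl \<alpha> f z1 z2)}"

definition Lambda :: "nat \<Rightarrow> complex set" where
  "Lambda n = {complex_of_real (real k * pi / real n) | k. k < n}"

text \<open>f^{(k)}_alpha evaluated at rho: the k-th derivative in phi of
  f(rho cos phi, rho sin phi) at phi = alpha.  As an element of C[rho] it is zero iff
  it vanishes for all rho.\<close>
definition phi_deriv :: "bipoly \<Rightarrow> nat \<Rightarrow> complex \<Rightarrow> complex \<Rightarrow> complex" where
  "phi_deriv f k \<alpha> \<rho> = (deriv ^^ k) (\<lambda>\<phi>. f (\<rho> * cos \<phi>) (\<rho> * sin \<phi>)) \<alpha>"

text \<open>Hom_C(A, C): C-linear maps A -> C, made canonical by being 0 outside A.\<close>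
definition HomC :: "bipoly set \<Rightarrow> bipoly set \<Rightarrow> (bipoly \<Rightarrow> bipoly) set" where
  "HomC C A = {\<phi>. (\<forall>a\<in>A. \<phi> a \<in> C)
       \<and> (\<forall>a\<in>A. \<forall>b\<in>A. \<phi> (\<lambda>z1 z2. a z1 z2 + b z1 z2) = (\<lambda>z1 z2. \<phi> a z1 z2 + \<phi> b z1 z2))
       \<and> (\<forall>c\<in>C. \<forall>a\<in>A. \<phi> (\<lambda>z1 z2. c z1 z2 * a z1 z2) = (\<lambda>z1 z2. c z1 z2 * \<phi> a z1 z2))
       \<and> (\<forall>a. a \<notin> A \<longrightarrow> \<phi> a = (\<lambda>z1 z2. 0))}"

end

theory Submission
  imports Defs "HOL-Complex_Analysis.Complex_Analysis" "HOL-Computational_Algebra.Polynomial"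
begin

definition ev0 :: "complex poly poly \<Rightarrow> bipoly" where
  "ev0 P = (\<lambda>x y. poly (poly P [:y:]) x)"

lemma ev0_add[simp]: "ev0 (P + Q) x y = ev0 P x y + ev0 Q x y"
  by (simp add: ev0_def)
lemma ev0_diff[simp]: "ev0 (P - Q) x y = ev0 P x y - ev0 Q x y"
  by (simp add: ev0_def)
lemma ev0_mult[simp]: "ev0 (P * Q) x y = ev0 P x y * ev0 Q x y"
  by (simp add: ev0_def)
lemma ev0_pCons: "ev0 (pCons a P) x y = poly a x + y * ev0 P x y"
  by (simp add: ev0_def)
lemma ev0_monom1[simp]: "ev0 (monom 1 k) x y = y ^ k"
proof -
  have "poly (monom 1 k) [:y:] = [:y:] ^ k" by (simp add: poly_monom)
  also have "\<dots> = [:y ^ k:]" by (induct k) auto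
  finally show ?thesis by (simp add: ev0_def)
qed
lemma ev0_0[simp]: "ev0 0 x y = 0" by (simp add: ev0_def)
lemma ev0_at0: "ev0 Q u 0 = poly (coeff Q 0) u"
  by (simp add: ev0_def poly_0_coeff_0)

lemma poly_upto:
  fixes x :: "'a::{comm_semiring_0,semiring_1}"
  assumes "degree p \<le> N" shows "poly p x = (\<Sum>i\<le>N. coeff p i * x ^ i)"
proof -
  have "(\<Sum>i\<le>degree p. coeff p i * x ^ i) = (\<Sum>i\<le>N. coeff p i * x ^ i)"
    by (rule sum.mono_neutral_left) (use assms in \<open>auto simp: coeff_eq_0\<close>)
  then show ?thesis by (simp add: poly_altdef)
qed

lemma R2_ev0: "R2 = range ev0"
proof (intro set_eqI iffI)
  fix f assume "f \<in> R2"
  then obtain N c where f: "\<And>z1 z2. f z1 z2 = (\<Sum>i\<le>N. \<Sum>j\<le>N. c i j * z1 ^ i * z2 ^ j)"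
    unfolding R2_def by blast
  define P where "P = (\<Sum>i\<le>N. \<Sum>j\<le>N. monom (monom (c i j) i) j)"
  have "ev0 P x y = f x y" for x y
    by (simp add: P_def ev0_def f poly_sum poly_monom poly_mult poly_power mult.assoc)
  then have "f = ev0 P" by (simp add: fun_eq_iff)
  then show "f \<in> range ev0" by simp
next
  fix f assume "f \<in> range ev0"
  then obtain P where fP: "f = ev0 P" by auto
  define N where "N = max (degree P) (Max ((\<lambda>k. degree (coeff P k)) ` {..degree P}))"
  have dP: "degree P \<le> N" by (simp add: N_def)
  have dc: "degree (coeff P k) \<le> N" for k
  proof (cases "k \<le> degree P")
    case True then show ?thesis unfolding N_def
      by (intro max.coboundedI2 Max_ge) auto
  next
    case False then show ?thesis by (simp add: coeff_eq_0)
  qed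
  have "f x y = (\<Sum>i\<le>N. \<Sum>j\<le>N. coeff (coeff P j) i * x ^ i * y ^ j)" for x y
  proof -
    have "f x y = poly (\<Sum>j\<le>N. coeff P j * [:y:] ^ j) x"
      unfolding fP ev0_def by (subst poly_upto[OF dP]) simp
    also have "\<dots> = (\<Sum>j\<le>N. poly (coeff P j) x * y ^ j)"
      by (simp add: poly_sum poly_power)
    also have "\<dots> = (\<Sum>j\<le>N. \<Sum>i\<le>N. coeff (coeff P j) i * x ^ i * y ^ j)"
      by (simp add: poly_upto[OF dc] sum_distrib_right)
    also have "\<dots> = (\<Sum>i\<le>N. \<Sum>j\<le>N. coeff (coeff P j) i * x ^ i * y ^ j)"
      by (rule sum.swap)
    finally show ?thesis .
  qed
  then show "f \<in> R2" unfolding R2_def by (intro CollectI exI allI)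
qed

lemma ev0_R2[simp]: "ev0 P \<in> R2" by (simp add: R2_ev0)

lemma R2_add: assumes "f \<in> R2" "g \<in> R2" shows "(\<lambda>x y. f x y + g x y) \<in> R2"
proof -
  obtain P Q where "f = ev0 P" "g = ev0 Q" using assms unfolding R2_ev0 by auto
  then have "(\<lambda>x y. f x y + g x y) = ev0 (P + Q)" by (simp add: fun_eq_iff)
  then show ?thesis by simp
qed
lemma R2_diff: assumes "f \<in> R2" "g \<in> R2" shows "(\<lambda>x y. f x y - g x y) \<in> R2"
proof -
  obtain P Q where "f = ev0 P" "g = ev0 Q" using assms unfolding R2_ev0 by auto
  then have "(\<lambda>x y. f x y - g x y) = ev0 (P - Q)" by (simp add: fun_eq_iff)
  then show ?thesis by simp
qed
lemma R2_mult: assumes "f \<in> R2" "g \<in> R2" shows "(\<lambda>x y. f x y * g x y) \<in> R2"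
proof -
  obtain P Q where "f = ev0 P" "g = ev0 Q" using assms unfolding R2_ev0 by auto
  then have "(\<lambda>x y. f x y * g x y) = ev0 (P * Q)" by (simp add: fun_eq_iff)
  then show ?thesis by simp
qed
lemma R2_const: "(\<lambda>x y. c) \<in> R2"
  unfolding R2_ev0 by (intro range_eqI[where x="[:[:c:]:]"]) (simp add: fun_eq_iff ev0_def)
lemma R2_x: "(\<lambda>x y. x) \<in> R2"
  unfolding R2_ev0 by (intro range_eqI[where x="[:[:0,1:]:]"]) (simp add: fun_eq_iff ev0_def)
lemma R2_y: "(\<lambda>x y. y) \<in> R2"
  unfolding R2_ev0 by (intro range_eqI[where x="[:0,1:]"]) (simp add: fun_eq_iff ev0_def)

lemma ev0_closed:
  assumes c: "\<And>c. (\<lambda>x y. c) \<in> K" and X: "(\<lambda>x y. x) \<in> K" and Y: "(\<lambda>x y. y) \<in> K"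
    and ad: "\<And>f g. f \<in> K \<Longrightarrow> g \<in> K \<Longrightarrow> (\<lambda>x y. f x y + g x y) \<in> K"
    and mu: "\<And>f g. f \<in> K \<Longrightarrow> g \<in> K \<Longrightarrow> (\<lambda>x y. f x y * g x y) \<in> K"
  shows "ev0 P \<in> K"
proof -
  have pa: "(\<lambda>x y. poly a x) \<in> K" for a
  proof (induct a)
    case 0 then show ?case using c[of 0] by simp
  next
    case (pCons b a)
    have "(\<lambda>x y. b + x * poly a x) \<in> K"
      using ad[OF c[of b] mu[OF X pCons(2)]] by simp
    then show ?case by simp
  qed
  show ?thesis
  proof (induct P)
    case 0 then show ?case using c[of 0] by (simp add: ev0_def)
  next
    case (pCons a P)
    have "(\<lambda>x y. poly a x + y * ev0 P x y) \<in> K"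
      using ad[OF pa[of a] mu[OF Y pCons(2)]] by simp
    then show ?case by (simp add: ev0_pCons[abs_def])
  qed
qed

lemma R2_induct:
  assumes "f \<in> R2"
    and c: "\<And>c. (\<lambda>x y. c) \<in> K" and X: "(\<lambda>x y. x) \<in> K" and Y: "(\<lambda>x y. y) \<in> K"
    and ad: "\<And>f g. f \<in> K \<Longrightarrow> g \<in> K \<Longrightarrow> (\<lambda>x y. f x y + g x y) \<in> K"
    and mu: "\<And>f g. f \<in> K \<Longrightarrow> g \<in> K \<Longrightarrow> (\<lambda>x y. f x y * g x y) \<in> K"
  shows "f \<in> K"
proof -
  from assms(1) obtain P where P: "f = ev0 P" unfolding R2_ev0 by (rule rangeE)
  have "ev0 P \<in> K" by (rule ev0_closed[OF c X Y ad mu])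
  then show ?thesis by (simp only: P)
qed

lemma R2_comp:
  assumes "f \<in> R2" "a \<in> R2" "b \<in> R2"
  shows "(\<lambda>x y. f (a x y) (b x y)) \<in> R2"
proof -
  have "f \<in> {f. (\<lambda>x y. f (a x y) (b x y)) \<in> R2}"
  proof (rule R2_induct[OF assms(1)])
    fix c show "(\<lambda>x y. c) \<in> {f. (\<lambda>x y. f (a x y) (b x y)) \<in> R2}" using R2_const[of c] by simp
  next
    show "(\<lambda>x y. x) \<in> {f. (\<lambda>x y. f (a x y) (b x y)) \<in> R2}" using assms(2) by simp
  next
    show "(\<lambda>x y. y) \<in> {f. (\<lambda>x y. f (a x y) (b x y)) \<in> R2}" using assms(3) by simp
  next
    fix f g assume "f \<in> {f. (\<lambda>x y. f (a x y) (b x y)) \<in> R2}" "g \<in> {f. (\<lambda>x y. f (a x y) (b x y)) \<in> R2}"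
    then have fg: "(\<lambda>x y. f (a x y) (b x y)) \<in> R2" "(\<lambda>x y. g (a x y) (b x y)) \<in> R2" by simp_all
    show "(\<lambda>x y. f x y + g x y) \<in> {f. (\<lambda>x y. f (a x y) (b x y)) \<in> R2}"
      using R2_add[OF fg] by simp
    show "(\<lambda>x y. f x y * g x y) \<in> {f. (\<lambda>x y. f (a x y) (b x y)) \<in> R2}"
      using R2_mult[OF fg] by simp
  qed
  then show ?thesis by simp
qed

lemma coeff_poly_const:
  "coeff (poly D [:y:]) i = poly (map_poly (\<lambda>p. coeff p i) D) y"
  by (induct D) (auto simp: map_poly_pCons)

lemma ev0_unique:
  assumes "\<And>x y. ev0 P x y = ev0 Q x y" shows "P = Q"
proof -
  define D where "D = P - Q"
  have "\<forall>x. poly (poly D [:y:]) x = 0" for y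
    using assms by (simp add: D_def ev0_def)
  then have "poly D [:y:] = 0" for y using poly_all_0_iff_0 by blast
  then have "\<forall>y. poly (map_poly (\<lambda>p. coeff p i) D) y = 0" for i
    by (metis coeff_0 coeff_poly_const)
  then have "map_poly (\<lambda>p. coeff p i) D = 0" for i using poly_all_0_iff_0 by blast
  then have "coeff (coeff D k) i = 0" for k i
    by (metis coeff_0 coeff_map_poly)
  then have "D = 0" by (metis leading_coeff_0_iff poly_eq_iff coeff_0)
  then show ?thesis by (simp add: D_def)
qed

lemma R2_lin: "(\<lambda>x y. p * x + q * y) \<in> R2"
proof -
  have "(\<lambda>x y. p * x + q * y) = ev0 [:[:0,p:], [:q:]:]" by (simp add: fun_eq_iff ev0_def algebra_simps)
  then show ?thesis by simp
qed

lemma cs1: "(sin a)^2 + (cos a)^2 = (1::complex)" by simp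
lemma cs2: "cos a * cos a + sin a * sin a = (1::complex)"
  using cs1[of a] by (simp add: power2_eq_square add.commute)
lemma lincomb: "P - Q = t * (cos a * cos a + sin a * sin a - 1) \<Longrightarrow> P = (Q::complex)"
  by (simp add: cs2)

lemma rot_rep: assumes "f \<in> R2"
  shows "\<exists>Q. \<forall>u v. f (cos a * u - sin a * v) (sin a * u + cos a * v) = ev0 Q u v"
proof -
  let ?K = "{f. \<exists>Q. \<forall>u v. f (cos a * u - sin a * v) (sin a * u + cos a * v) = ev0 Q u v}"
  have "f \<in> ?K"
  proof (rule R2_induct[OF assms])
    fix c show "(\<lambda>x y. c) \<in> ?K" by (auto intro!: exI[of _ "[:[:c:]:]"] simp: ev0_def)
  next
    show "(\<lambda>x y. x) \<in> ?K" by (auto intro!: exI[of _ "[:[:0, cos a:], [:- sin a:]:]"] simp: ev0_def)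
  next
    show "(\<lambda>x y. y) \<in> ?K" by (auto intro!: exI[of _ "[:[:0, sin a:], [:cos a:]:]"] simp: ev0_def algebra_simps)
  next
    fix f g assume "f \<in> ?K" "g \<in> ?K"
    then obtain P Q where "\<forall>u v. f (cos a * u - sin a * v) (sin a * u + cos a * v) = ev0 P u v"
       "\<forall>u v. g (cos a * u - sin a * v) (sin a * u + cos a * v) = ev0 Q u v" by auto
    then show "(\<lambda>x y. f x y + g x y) \<in> ?K" by (auto intro!: exI[of _ "P + Q"])
  next
    fix f g assume "f \<in> ?K" "g \<in> ?K"
    then obtain P Q where "\<forall>u v. f (cos a * u - sin a * v) (sin a * u + cos a * v) = ev0 P u v"
       "\<forall>u v. g (cos a * u - sin a * v) (sin a * u + cos a * v) = ev0 Q u v" by auto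
    then show "(\<lambda>x y. f x y * g x y) \<in> ?K" by (auto intro!: exI[of _ "P * Q"])
  qed
  then show ?thesis by simp
qed

definition Qof :: "complex \<Rightarrow> bipoly \<Rightarrow> complex poly poly" where
  "Qof a f = (SOME Q. \<forall>u v. f (cos a * u - sin a * v) (sin a * u + cos a * v) = ev0 Q u v)"

lemma Qof: assumes "f \<in> R2"
  shows "f (cos a * u - sin a * v) (sin a * u + cos a * v) = ev0 (Qof a f) u v"
  using someI_ex[OF rot_rep[OF assms, of a]] unfolding Qof_def by blast

lemma Qof_eqI: assumes "\<And>u v. f (cos a * u - sin a * v) (sin a * u + cos a * v) = ev0 Q u v"
  shows "Qof a f = Q"
proof -
  have "\<forall>u v. f (cos a * u - sin a * v) (sin a * u + cos a * v) = ev0 (Qof a f) u v"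
    using someI[of "\<lambda>Q. \<forall>u v. f (cos a * u - sin a * v) (sin a * u + cos a * v) = ev0 Q u v" Q]
      assms unfolding Qof_def by blast
  then show ?thesis using assms by (intro ev0_unique) metis
qed

lemma rot_inv1: "cos a * (cos a * x + sin a * y) - sin a * (- sin a * x + cos a * y) = (x::complex)"
  by (rule lincomb[where t=x and a=a]) algebra
lemma rot_inv2: "sin a * (cos a * x + sin a * y) + cos a * (- sin a * x + cos a * y) = (y::complex)"
  by (rule lincomb[where t=y and a=a]) algebra

lemma Qof_inv: assumes "f \<in> R2"
  shows "f x y = ev0 (Qof a f) (cos a * x + sin a * y) (- sin a * x + cos a * y)"
  using Qof[OF assms, of a "cos a * x + sin a * y" "- sin a * x + cos a * y"]
  unfolding rot_inv1 rot_inv2 by (simp only:)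

lemma lform_rot: "lform a (cos a * u - sin a * v) (sin a * u + cos a * v) = v"
  unfolding lform_def by (rule lincomb[where t=v and a=a]) algebra

lemma lform_R2: "lform a \<in> R2"
  unfolding lform_def by (rule R2_lin)

lemma srefl_rot: "srefl a f (cos a * u - sin a * v) (sin a * u + cos a * v)
   = f (cos a * u - sin a * (-v)) (sin a * u + cos a * (-v))"
proof -
  have w: "cos a * (cos a * u - sin a * v) + sin a * (sin a * u + cos a * v) = u"
    by (rule lincomb[where t=u and a=a]) algebra
  show ?thesis unfolding srefl_def w by (simp add: algebra_simps)
qed

lemma srefl_R2: assumes "f \<in> R2" shows "srefl a f \<in> R2"
proof -
  have "srefl a f = (\<lambda>x y. f ((2 * cos a * cos a - 1) * x + (2 * cos a * sin a) * y)
                           ((2 * cos a * sin a) * x + (2 * sin a * sin a - 1) * y))"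
    unfolding srefl_def by (simp add: fun_eq_iff algebra_simps)
  then show ?thesis using R2_comp[OF assms R2_lin R2_lin] by simp
qed

lemma ev0_neg: "ev0 (pcompose Q [:0,-1:]) u v = ev0 Q u (-v)"
  by (simp add: ev0_def poly_pcompose)

lemma Qof_srefl: assumes "f \<in> R2" shows "Qof a (srefl a f) = pcompose (Qof a f) [:0,-1:]"
proof (rule Qof_eqI)
  fix u v
  show "srefl a f (cos a * u - sin a * v) (sin a * u + cos a * v) = ev0 (Qof a f \<circ>\<^sub>p [:0, - 1:]) u v"
    unfolding srefl_rot ev0_neg Qof[OF assms, of a u "-v", symmetric] ..
qed

lemma Qof_add: "f \<in> R2 \<Longrightarrow> g \<in> R2 \<Longrightarrow> Qof a (\<lambda>x y. f x y + g x y) = Qof a f + Qof a g"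
  by (rule Qof_eqI) (simp add: Qof)
lemma Qof_diff: "f \<in> R2 \<Longrightarrow> g \<in> R2 \<Longrightarrow> Qof a (\<lambda>x y. f x y - g x y) = Qof a f - Qof a g"
  by (rule Qof_eqI) (simp add: Qof)
lemma Qof_mult: "f \<in> R2 \<Longrightarrow> g \<in> R2 \<Longrightarrow> Qof a (\<lambda>x y. f x y * g x y) = Qof a f * Qof a g"
  by (rule Qof_eqI) (simp add: Qof)
lemma Qof_lpow: "h \<in> R2 \<Longrightarrow> Qof a (\<lambda>x y. lform a x y ^ k * h x y) = monom 1 k * Qof a h"
  by (rule Qof_eqI) (simp add: Qof lform_rot)

lemma pdvd_Qof: assumes "g \<in> R2"
  shows "pdvd_pow (lform a) k g \<longleftrightarrow> (\<forall>i<k. coeff (Qof a g) i = 0)"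
proof
  assume "pdvd_pow (lform a) k g"
  then obtain h where h: "h \<in> R2" "\<And>x y. g x y = lform a x y ^ k * h x y"
    unfolding pdvd_pow_def by blast
  then have "g = (\<lambda>x y. lform a x y ^ k * h x y)" by (simp add: fun_eq_iff)
  then have "Qof a g = monom 1 k * Qof a h" using Qof_lpow[OF h(1)] by simp
  then show "\<forall>i<k. coeff (Qof a g) i = 0" by (simp add: coeff_monom_mult)
next
  assume "\<forall>i<k. coeff (Qof a g) i = 0"
  then have "monom 1 k dvd Qof a g" by (simp add: monom_1_dvd_iff')
  then obtain H where H: "Qof a g = monom 1 k * H" by (auto simp: dvd_def)
  define h where "h = (\<lambda>x y. ev0 H (cos a * x + sin a * y) (- sin a * x + cos a * y))"
  have "h \<in> R2" unfolding h_def by (rule R2_comp[OF ev0_R2 R2_lin R2_lin])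
  moreover have "g x y = lform a x y ^ k * h x y" for x y
    by (subst Qof_inv[OF assms, of _ _ a]) (simp add: H h_def lform_def)
  ultimately show "pdvd_pow (lform a) k g" unfolding pdvd_pow_def by blast
qed

lemma Acond_Qof: assumes "f \<in> R2"
  shows "pdvd_pow (lform a) (2 * k + 1) (\<lambda>x y. f x y - srefl a f x y)
     \<longleftrightarrow> (\<forall>i. odd i \<and> i < 2 * k \<longrightarrow> coeff (Qof a f) i = 0)"
proof -
  have sR: "srefl a f \<in> R2" by (rule srefl_R2[OF assms])
  have Q: "Qof a (\<lambda>x y. f x y - srefl a f x y) = Qof a f - pcompose (Qof a f) [:0,-1:]"
    using Qof_diff[OF assms sR] Qof_srefl[OF assms] by simp
  have c: "coeff (Qof a (\<lambda>x y. f x y - srefl a f x y)) i = (if even i then 0 else 2 * coeff (Qof a f) i)" for i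
    unfolding Q by (simp add: coeff_pcompose_linear)
  show ?thesis
    unfolding pdvd_Qof[OF R2_diff[OF assms sR]] c
  proof (intro iffI allI impI)
    fix i assume h: "\<forall>i<2 * k + 1. (if even i then 0 else 2 * coeff (Qof a f) i) = 0" "odd i \<and> i < 2 * k"
    then show "coeff (Qof a f) i = 0" using h(1)[rule_format, of i] by auto
  next
    fix i assume h: "\<forall>i. odd i \<and> i < 2 * k \<longrightarrow> coeff (Qof a f) i = 0" "i < 2 * k + 1"
    show "(if even i then 0 else 2 * coeff (Qof a f) i) = 0"
    proof (cases "even i")
      case False
      then have "i < 2 * k" using h(2) by presburger
      then show ?thesis using h(1) False by auto
    qed simp
  qed
qed

lemma algA_char: "algA P \<mu> = {f \<in> R2. \<forall>a\<in>P. \<forall>i. odd i \<and> i < 2 * \<mu> a \<longrightarrow> coeff (Qof a f) i = 0}"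
  unfolding algA_def using Acond_Qof by auto

lemma poly_holo: "g holomorphic_on S \<Longrightarrow> (\<lambda>w. poly p (g w)) holomorphic_on S"
  by (induct p) (auto intro!: holomorphic_intros)

lemma ev0_holo:
  assumes "f holomorphic_on S" "g holomorphic_on S"
  shows "(\<lambda>w. ev0 H (f w) (g w)) holomorphic_on S"
proof (induct H)
  case 0 then show ?case by (simp add: ev0_def)
next
  case (pCons a H)
  then show ?case unfolding ev0_pCons using assms by (auto intro!: holomorphic_intros poly_holo)
qed

lemma hd_prod:
  fixes f g :: "complex \<Rightarrow> complex"
  assumes hf: "f holomorphic_on UNIV" and hg: "g holomorphic_on UNIV"
    and zf: "\<And>i. i < p \<Longrightarrow> (deriv ^^ i) f z = 0"
    and zg: "\<And>j. j < q \<Longrightarrow> (deriv ^^ j) g z = 0"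
  shows "n < p + q \<Longrightarrow> (deriv ^^ n) (\<lambda>w. f w * g w) z = 0"
    and "(deriv ^^ (p + q)) (\<lambda>w. f w * g w) z = of_nat ((p + q) choose p) * (deriv ^^ p) f z * (deriv ^^ q) g z"
proof -
  assume n: "n < p + q"
  have "(deriv ^^ n) (\<lambda>w. f w * g w) z =
           (\<Sum>i = 0..n. of_nat (n choose i) * (deriv ^^ i) f z * (deriv ^^ (n-i)) g z)"
    by (rule higher_deriv_mult[OF hf hg]) auto
  also have "\<dots> = 0"
  proof (rule sum.neutral, intro ballI)
    fix i assume i: "i \<in> {0..n}"
    show "of_nat (n choose i) * (deriv ^^ i) f z * (deriv ^^ (n-i)) g z = 0"
    proof (cases "i < p")
      case True then show ?thesis by (simp add: zf)
    next
      case False then have "n - i < q" using n i by auto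
      then show ?thesis by (simp add: zg)
    qed
  qed
  finally show "(deriv ^^ n) (\<lambda>w. f w * g w) z = 0" .
next
  let ?n = "p + q"
  let ?F = "\<lambda>i. of_nat (?n choose i) * (deriv ^^ i) f z * (deriv ^^ (?n-i)) g z"
  have "(deriv ^^ ?n) (\<lambda>w. f w * g w) z = (\<Sum>i = 0..?n. ?F i)"
    by (rule higher_deriv_mult[OF hf hg]) auto
  also have "\<dots> = ?F p + (\<Sum>i \<in> {0..?n} - {p}. ?F i)"
    by (rule sum.remove) auto
  also have "(\<Sum>i \<in> {0..?n} - {p}. ?F i) = 0"
  proof (rule sum.neutral, intro ballI)
    fix i assume i: "i \<in> {0..?n} - {p}"
    show "?F i = 0"
    proof (cases "i < p")
      case True then show ?thesis by (simp add: zf)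
    next
      case False then have "?n - i < q" using i by auto
      then show ?thesis by (simp add: zg)
    qed
  qed
  finally show "(deriv ^^ ?n) (\<lambda>w. f w * g w) z = of_nat (?n choose p) * (deriv ^^ p) f z * (deriv ^^ q) g z"
    by simp
qed

lemma hd_pow:
  fixes s :: "complex \<Rightarrow> complex"
  assumes hs: "s holomorphic_on UNIV" and s0: "s z = 0" and ds: "deriv s z = d"
  shows "(\<forall>j<K. (deriv ^^ j) (\<lambda>w. s w ^ K) z = 0) \<and> (deriv ^^ K) (\<lambda>w. s w ^ K) z = fact K * d ^ K"
proof (induct K)
  case 0 then show ?case by simp
next
  case (Suc K)
  have h1: "(\<lambda>w. s w ^ K) holomorphic_on UNIV" using hs by (auto intro!: holomorphic_intros)
  have z1: "\<And>i. i < 1 \<Longrightarrow> (deriv ^^ i) s z = 0" using s0 by simp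
  have z2: "\<And>j. j < K \<Longrightarrow> (deriv ^^ j) (\<lambda>w. s w ^ K) z = 0" using Suc by blast
  have eq: "(\<lambda>w. s w ^ Suc K) = (\<lambda>w. s w * s w ^ K)" by simp
  show ?case unfolding eq
    using hd_prod(1)[where p=1 and q=K, OF hs h1 z1 z2] hd_prod(2)[where p=1 and q=K, OF hs h1 z1 z2] Suc ds
    by (simp add: algebra_simps)
qed

lemma deriv_sinshift: "deriv (\<lambda>w. r * sin (w - a)) a = (r::complex)"
proof -
  have "((\<lambda>w. r * sin (w - a)) has_field_derivative r * (cos (a - a) * 1)) (at a)"
    by (auto intro!: derivative_eq_intros)
  then show ?thesis by (simp add: DERIV_imp_deriv)
qed

lemma phi_rot: assumes "f \<in> R2"
  shows "f (r * cos w) (r * sin w) = ev0 (Qof a f) (r * cos (w - a)) (r * sin (w - a))"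
proof -
  have w: "w = a + (w - a)" by simp
  have "f (r * cos w) (r * sin w) = f (cos a * (r * cos (w - a)) - sin a * (r * sin (w - a)))
            (sin a * (r * cos (w - a)) + cos a * (r * sin (w - a)))"
    by (subst (1 2) w, simp only: cos_add sin_add) (simp add: algebra_simps)
  then show ?thesis by (simp add: Qof[OF assms])
qed

lemma DL:
  assumes "f \<in> R2" and z: "\<forall>i<K. coeff (Qof a f) i = 0"
  shows "\<forall>j<K. phi_deriv f j a r = 0"
    and "phi_deriv f K a r = fact K * r ^ K * poly (coeff (Qof a f) K) r"
proof -
  have "monom 1 K dvd Qof a f" using z by (simp add: monom_1_dvd_iff')
  then obtain H where H: "Qof a f = monom 1 K * H" by (auto simp: dvd_def)
  define s where "s = (\<lambda>w. r * sin (w - a))"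
  define b where "b = (\<lambda>w. ev0 H (r * cos (w - a)) (r * sin (w - a)))"
  have fe: "(\<lambda>w. f (r * cos w) (r * sin w)) = (\<lambda>w. s w ^ K * b w)"
  proof (rule ext)
    fix w show "f (r * cos w) (r * sin w) = s w ^ K * b w"
      using phi_rot[OF assms(1), of r w a] by (simp only: H ev0_mult ev0_monom1 s_def b_def)
  qed
  have hs: "s holomorphic_on UNIV" unfolding s_def by (auto intro!: holomorphic_intros)
  have hb: "b holomorphic_on UNIV" unfolding b_def by (rule ev0_holo) (auto intro!: holomorphic_intros)
  have hsK: "(\<lambda>w. s w ^ K) holomorphic_on UNIV" using hs by (auto intro!: holomorphic_intros)
  have P: "(\<forall>j<K. (deriv ^^ j) (\<lambda>w. s w ^ K) a = 0) \<and> (deriv ^^ K) (\<lambda>w. s w ^ K) a = fact K * r ^ K"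
    by (rule hd_pow[OF hs]) (auto simp: s_def deriv_sinshift[unfolded s_def])
  have z2: "\<And>j. j < 0 \<Longrightarrow> (deriv ^^ j) b a = 0" by simp
  have P1: "\<And>i. i < K \<Longrightarrow> (deriv ^^ i) (\<lambda>w. s w ^ K) a = 0" using P by blast
  show "\<forall>j<K. phi_deriv f j a r = 0"
    unfolding phi_deriv_def fe using hd_prod(1)[where p=K and q=0, OF hsK hb P1 z2] by simp
  have "b a = poly (coeff H 0) r" by (simp add: b_def ev0_at0)
  moreover have "coeff (Qof a f) K = coeff H 0" by (simp add: H coeff_monom_mult)
  ultimately show "phi_deriv f K a r = fact K * r ^ K * poly (coeff (Qof a f) K) r"
    unfolding phi_deriv_def fe using hd_prod(2)[where p=K and q=0, OF hsK hb P1 z2] P by simp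
qed

lemma poly_rpow_zero:
  fixes p :: "complex poly"
  assumes "\<forall>r. fact K * r ^ K * poly p r = 0" shows "p = 0"
proof -
  have "\<forall>r. poly (smult (fact K) (monom 1 K * p)) r = 0"
    using assms by (simp add: poly_monom)
  then have "smult (fact K) (monom 1 K * p) = 0" using poly_all_0_iff_0 by blast
  then show ?thesis by (simp add: monom_eq_0_iff)
qed

lemma SC:
  assumes "f \<in> R2" and C: "\<forall>i. odd i \<and> i < 2 * m \<longrightarrow> coeff (Qof a f) i = 0" and "nu \<le> m"
  shows "(\<forall>j<nu. \<forall>r. phi_deriv f (2 * j) a r = 0) \<longleftrightarrow> (\<forall>i<2 * nu. coeff (Qof a f) i = 0)"
proof
  assume "\<forall>i<2 * nu. coeff (Qof a f) i = 0"
  then show "\<forall>j<nu. \<forall>r. phi_deriv f (2 * j) a r = 0"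
    using DL(1)[OF assms(1)] by auto
next
  assume S: "\<forall>j<nu. \<forall>r. phi_deriv f (2 * j) a r = 0"
  have "K \<le> 2 * nu \<Longrightarrow> (\<forall>i<K. coeff (Qof a f) i = 0)" for K
  proof (induct K)
    case 0 then show ?case by simp
  next
    case (Suc K)
    then have IH: "\<forall>i<K. coeff (Qof a f) i = 0" by simp
    have "coeff (Qof a f) K = 0"
    proof (cases "odd K")
      case True then show ?thesis using C Suc(2) assms(3) by auto
    next
      case False
      then obtain j where j: "K = 2 * j" by auto
      then have "j < nu" using Suc(2) by simp
      then have "\<forall>r. fact K * r ^ K * poly (coeff (Qof a f) K) r = 0"
        using S DL(2)[OF assms(1) IH] j by metis
      then show ?thesis by (rule poly_rpow_zero)
    qed
    then show ?case using IH less_Suc_eq by auto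
  qed
  then show "\<forall>i<2 * nu. coeff (Qof a f) i = 0" by blast
qed

lemma R2_pow: "f \<in> R2 \<Longrightarrow> (\<lambda>x y. f x y ^ k) \<in> R2"
proof (induct k)
  case 0 then show ?case using R2_const[of 1] by simp
next
  case (Suc k)
  then show ?case using R2_mult[OF Suc(2) Suc(1)[OF Suc(2)]] by simp
qed

lemma R2_prod: "finite S \<Longrightarrow> (\<And>b. b \<in> S \<Longrightarrow> g b \<in> R2) \<Longrightarrow> (\<lambda>x y. \<Prod>b\<in>S. g b x y) \<in> R2"
proof (induct S rule: finite_induct)
  case empty then show ?case using R2_const[of 1] by simp
next
  case (insert b S)
  have "(\<lambda>x y. g b x y * (\<Prod>b\<in>S. g b x y)) \<in> R2"
    by (rule R2_mult) (use insert in auto)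
  then show ?case using insert by simp
qed

lemma lpow_R2: "(\<lambda>x y. lform b x y ^ k) \<in> R2"
  by (rule R2_pow[OF lform_R2])

lemma lpowprod_R2: "finite S \<Longrightarrow> (\<lambda>x y. \<Prod>b\<in>S. lform b x y ^ k) \<in> R2"
  by (rule R2_prod) (auto intro: lpow_R2)

lemma lpow_zero:
  assumes "h \<in> R2" "\<And>x y. F x y = lform b x y ^ e * h x y"
  shows "\<forall>i<e. coeff (Qof b F) i = 0"
proof -
  have "F = (\<lambda>x y. lform b x y ^ e * h x y)" using assms(2) by (simp add: fun_eq_iff)
  then show ?thesis using Qof_lpow[OF assms(1), of b e] by (simp add: coeff_monom_mult)
qed

lemma R2_domain:
  assumes "p \<in> R2" "q \<in> R2" "\<And>x y. p x y * q x y = 0" "p x0 y0 \<noteq> 0"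
  shows "q x y = 0"
proof -
  obtain P Q where P: "p = ev0 P" and Q: "q = ev0 Q" using assms(1,2) unfolding R2_ev0 by blast
  have "P * Q = 0" by (rule ev0_unique) (use assms(3) in \<open>simp add: P Q\<close>)
  moreover have "P \<noteq> 0" using assms(4) P by auto
  ultimately have "Q = 0" by simp
  then show ?thesis by (simp add: Q)
qed

lemma odd_mult:
  fixes P Q :: "complex poly poly"
  assumes "\<forall>i. odd i \<and> i < N \<longrightarrow> coeff P i = 0" "\<forall>i. odd i \<and> i < N \<longrightarrow> coeff Q i = 0"
    "odd k" "k < N"
  shows "coeff (P * Q) k = 0"
  unfolding coeff_mult
proof (rule sum.neutral, intro ballI)
  fix i assume i: "i \<in> {..k}"
  show "coeff P i * coeff Q (k - i) = 0"
  proof (cases "odd i")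
    case True then show ?thesis using assms(1,4) i by auto
  next
    case False
    then have "odd (k - i)" using assms(3) i by auto
    then show ?thesis using assms(2,4) i by auto
  qed
qed

lemma cond_mult2:
  fixes P G :: "complex poly poly"
  assumes "\<forall>i<2 * nu. coeff G i = 0" "\<forall>i. odd i \<and> i < 2 * m \<longrightarrow> coeff G i = 0"
    "\<forall>i. odd i \<and> i < 2 * mu \<longrightarrow> coeff P i = 0" "m = mu + nu" "odd k" "k < 2 * m"
  shows "coeff (P * G) k = 0"
  unfolding coeff_mult
proof (rule sum.neutral, intro ballI)
  fix i assume i: "i \<in> {..k}"
  show "coeff P i * coeff G (k - i) = 0"
  proof (cases "k - i < 2 * nu")
    case True then show ?thesis using assms(1) by auto
  next
    case False
    then have i2: "i < 2 * mu" using assms(4,6) i by auto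
    show ?thesis
    proof (cases "odd (k - i)")
      case True then show ?thesis using assms(2,6) by auto
    next
      case False
      then have "odd i" using assms(5) i by auto
      then show ?thesis using assms(3) i2 by auto
    qed
  qed
qed

lemma coeff_lowest:
  fixes P G :: "complex poly poly"
  assumes "\<forall>j<e. coeff P j = 0" "\<forall>j<d. coeff G j = 0"
  shows "coeff (P * G) (e + d) = coeff P e * coeff G d"
proof -
  obtain P' where P: "P = monom 1 e * P'" using assms(1) monom_1_dvd_iff'[of e P] by (auto simp: dvd_def)
  obtain G' where G: "G = monom 1 d * G'" using assms(2) monom_1_dvd_iff'[of d G] by (auto simp: dvd_def)
  have "P * G = (monom 1 e * monom 1 d) * (P' * G')" by (simp add: P G ac_simps)
  also have "monom 1 e * monom 1 d = (monom 1 (e + d) :: complex poly poly)" by (simp add: mult_monom)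
  finally have PG: "P * G = monom 1 (e + d) * (P' * G')" .
  have "coeff (P * G) (e + d) = coeff (P' * G') 0" unfolding PG by (simp add: coeff_monom_mult)
  moreover have "coeff P e = coeff P' 0" by (simp add: P coeff_monom_mult)
  moreover have "coeff G d = coeff G' 0" by (simp add: G coeff_monom_mult)
  ultimately show ?thesis by (simp add: coeff_mult_0)
qed

lemma Lambda_img: "Lambda n = (\<lambda>k. complex_of_real (real k * pi / real n)) ` {..<n}"
  unfolding Lambda_def by auto

lemma Lambda_finite: "finite (Lambda n)"
  unfolding Lambda_img by simp

lemma Lambda_sin:
  assumes "a \<in> Lambda n" "b \<in> Lambda n" "a \<noteq> b"
  shows "sin (a - b) \<noteq> 0"
proof
  assume s: "sin (a - b) = 0"
  obtain k k' where k: "k < n" "a = complex_of_real (real k * pi / real n)"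
    and k': "k' < n" "b = complex_of_real (real k' * pi / real n)"
    using assms(1,2) unfolding Lambda_def by auto
  have n: "real n > 0" using k by simp
  have "a - b = complex_of_real ((real k - real k') * pi / real n)"
    using k k' by (simp add: diff_divide_distrib left_diff_distrib)
  then have "sin ((real k - real k') * pi / real n) = 0" using s
    by (metis of_real_eq_0_iff sin_of_real)
  then obtain i :: int where i: "(real k - real k') * pi / real n = of_int i * pi"
    using sin_zero_iff_int2 by blast
  then have "(real k - real k') * pi = (of_int i * real n) * pi" using n
    by (simp add: field_simps)
  then have "real k - real k' = of_int i * real n" using pi_neq_zero by simp
  then have ii: "int k - int k' = i * int n"
    by (metis of_int_eq_iff of_int_diff of_int_mult of_int_of_nat_eq)
  have "i = 0"
  proof (rule ccontr)
    assume "i \<noteq> 0"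
    then have "i \<ge> 1 \<or> i \<le> -1" by auto
    then show False
    proof
      assume "i \<ge> 1"
      then have "i * int n \<ge> int n" using n by (simp add: mult_le_cancel_right1)
      then show False using ii k' k by linarith
    next
      assume "i \<le> -1"
      then have "i * int n \<le> (-1) * int n" by (intro mult_right_mono) auto
      then have "i * int n \<le> - int n" by simp
      then show False using ii k' k by linarith
    qed
  qed
  then have "k = k'" using ii by simp
  then show False using assms(3) k k' by simp
qed

lemma lform_1i: "lform b 1 \<i> \<noteq> 0"
proof -
  have "lform b 1 \<i> = \<i> * exp (\<i> * b)"
    by (simp add: lform_def exp_Euler algebra_simps)
  then show ?thesis by simp
qed

lemma lform_cs: "lform g (cos a) (sin a) = sin (a - g)"
  by (simp add: lform_def sin_diff algebra_simps)

theorem theorem3p10: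
  fixes n :: nat and \<mu> :: "complex \<Rightarrow> nat"
  assumes "n \<ge> 1"
  defines "m \<equiv> Max (\<mu> ` Lambda n)"
  defines "\<nu> \<equiv> (\<lambda>\<alpha>. m - \<mu> \<alpha>)"
  defines "A \<equiv> algA (Lambda n) \<mu>"
  defines "C \<equiv> algA (Lambda n) (\<lambda>_. m)"
  defines "\<Omega> \<equiv> HomC C A"
  defines "S \<equiv> {f \<in> C. \<forall>\<alpha>\<in>Lambda n. \<forall>j < \<nu> \<alpha>. \<forall>\<rho>. phi_deriv f (2 * j) \<alpha> \<rho> = 0}"
  shows "\<exists>\<Phi>. bij_betw \<Phi> \<Omega> S
     \<and> (\<forall>\<phi>\<in>\<Omega>. \<forall>\<psi>\<in>\<Omega>. \<Phi> (\<lambda>a z1 z2. \<phi> a z1 z2 + \<psi> a z1 z2)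
                          = (\<lambda>z1 z2. \<Phi> \<phi> z1 z2 + \<Phi> \<psi> z1 z2))
     \<and> (\<forall>c\<in>C. \<forall>\<phi>\<in>\<Omega>. \<Phi> (\<lambda>a z1 z2. c z1 z2 * \<phi> a z1 z2)
                          = (\<lambda>z1 z2. c z1 z2 * \<Phi> \<phi> z1 z2))"
proof -
  let ?L = "Lambda n"
  have finL: "finite ?L" by (rule Lambda_finite)
  have mule: "\<And>a. a \<in> ?L \<Longrightarrow> \<mu> a \<le> m" unfolding m_def using finL by auto
  have msum: "\<And>a. a \<in> ?L \<Longrightarrow> m = \<mu> a + \<nu> a" using mule unfolding \<nu>_def by fastforce
  have Achar: "\<And>f. f \<in> A \<longleftrightarrow> f \<in> R2 \<and> (\<forall>a\<in>?L. \<forall>i. odd i \<and> i < 2 * \<mu> a \<longrightarrow> coeff (Qof a f) i = 0)"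
    unfolding A_def algA_char by simp
  have Cchar: "\<And>f. f \<in> C \<longleftrightarrow> f \<in> R2 \<and> (\<forall>a\<in>?L. \<forall>i. odd i \<and> i < 2 * m \<longrightarrow> coeff (Qof a f) i = 0)"
    unfolding C_def algA_char by simp
  have CA: "\<And>f. f \<in> C \<Longrightarrow> f \<in> A"
  proof -
    fix f assume "f \<in> C"
    then have "f \<in> R2" "\<forall>a\<in>?L. \<forall>i. odd i \<and> i < 2 * m \<longrightarrow> coeff (Qof a f) i = 0"
      using Cchar by auto
    moreover have "\<And>a i. a \<in> ?L \<Longrightarrow> i < 2 * \<mu> a \<Longrightarrow> i < 2 * m" using mule
      by (meson le_less_trans mult_le_mono2 not_less)
    ultimately show "f \<in> A" using Achar by blast
  qed
  have Amult: "\<And>f g. f \<in> A \<Longrightarrow> g \<in> A \<Longrightarrow> (\<lambda>x y. f x y * g x y) \<in> A"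
  proof -
    fix f g assume f: "f \<in> A" and g: "g \<in> A"
    have fR: "f \<in> R2" and gR: "g \<in> R2" using f g Achar by auto
    show "(\<lambda>x y. f x y * g x y) \<in> A" unfolding Achar
    proof (intro conjI ballI allI impI)
      show "(\<lambda>x y. f x y * g x y) \<in> R2" by (rule R2_mult[OF fR gR])
    next
      fix a i assume a: "a \<in> ?L" and i: "odd i \<and> i < 2 * \<mu> a"
      show "coeff (Qof a (\<lambda>x y. f x y * g x y)) i = 0"
        unfolding Qof_mult[OF fR gR]
        by (rule odd_mult[where N="2 * \<mu> a"]) (use f g a i Achar in auto)
    qed
  qed
  have Aadd: "\<And>f g. f \<in> A \<Longrightarrow> g \<in> A \<Longrightarrow> (\<lambda>x y. f x y + g x y) \<in> A"
  proof -
    fix f g assume f: "f \<in> A" and g: "g \<in> A"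
    have fR: "f \<in> R2" and gR: "g \<in> R2" using f g Achar by auto
    show "(\<lambda>x y. f x y + g x y) \<in> A" unfolding Achar
    proof (intro conjI ballI allI impI)
      show "(\<lambda>x y. f x y + g x y) \<in> R2" by (rule R2_add[OF fR gR])
    next
      fix a i assume a: "a \<in> ?L" and i: "odd i \<and> i < 2 * \<mu> a"
      show "coeff (Qof a (\<lambda>x y. f x y + g x y)) i = 0"
        unfolding Qof_add[OF fR gR] using f g a i Achar by auto
    qed
  qed
  define one where "one = (\<lambda>(x::complex) (y::complex). (1::complex))"
  have oneR: "one \<in> R2" unfolding one_def by (rule R2_const)
  have Qone: "Qof a one = 1" for a
    by (rule Qof_eqI) (simp add: one_def ev0_def)
  have oneA: "one \<in> A" unfolding Achar using oneR Qone by (auto simp: coeff_1 odd_pos)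
  define \<delta> where "\<delta> = (\<lambda>x y. \<Prod>b\<in>?L. lform b x y ^ (2 * m + 2))"
  have \<delta>R: "\<delta> \<in> R2" unfolding \<delta>_def by (rule lpowprod_R2[OF finL])
  have \<delta>C: "(\<lambda>x y. \<delta> x y * f x y) \<in> C" if fR: "f \<in> R2" for f
    unfolding Cchar
  proof (intro conjI ballI allI impI)
    show "(\<lambda>x y. \<delta> x y * f x y) \<in> R2" by (rule R2_mult[OF \<delta>R fR])
  next
    fix b i assume b: "b \<in> ?L" and i: "odd i \<and> i < 2 * m"
    define h where "h = (\<lambda>x y. (\<Prod>g\<in>?L - {b}. lform g x y ^ (2 * m + 2)) * f x y)"
    have hR: "h \<in> R2" unfolding h_def
      by (rule R2_mult[OF lpowprod_R2 fR]) (use finL in simp)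
    have "\<delta> x y * f x y = lform b x y ^ (2 * m + 2) * h x y" for x y
      unfolding \<delta>_def h_def by (simp add: prod.remove[OF finL b] mult.assoc)
    from lpow_zero[OF hR this] show "coeff (Qof b (\<lambda>x y. \<delta> x y * f x y)) i = 0"
      using i by auto
  qed
  have \<delta>nz: "\<delta> 1 \<i> \<noteq> 0" unfolding \<delta>_def using finL lform_1i by (simp add: prod_zero_iff)
  have \<delta>C': "\<delta> \<in> C" using \<delta>C[OF oneR] by (simp add: one_def)
  have hom: "\<phi> a \<in> C" "\<And>c a. c \<in> C \<Longrightarrow> a \<in> A \<Longrightarrow> \<phi> (\<lambda>z1 z2. c z1 z2 * a z1 z2) = (\<lambda>z1 z2. c z1 z2 * \<phi> a z1 z2)"
    if "\<phi> \<in> \<Omega>" "a \<in> A" for \<phi> a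
    using that unfolding \<Omega>_def HomC_def by auto
  have \<Omega>char: "\<phi> a = (\<lambda>x y. a x y * \<phi> one x y)" if \<phi>: "\<phi> \<in> \<Omega>" and a: "a \<in> A" for \<phi> a
  proof -
    have aR: "a \<in> R2" using a Achar by auto
    have daC: "(\<lambda>x y. \<delta> x y * a x y) \<in> C" using \<delta>C[OF aR] .
    have e1: "\<phi> (\<lambda>x y. (\<delta> x y * a x y) * one x y) = (\<lambda>x y. (\<delta> x y * a x y) * \<phi> one x y)"
      using hom(2)[OF \<phi> oneA daC oneA] by simp
    have e2: "\<phi> (\<lambda>x y. \<delta> x y * a x y) = (\<lambda>x y. \<delta> x y * \<phi> a x y)"
      using hom(2)[OF \<phi> a \<delta>C' a] by simp
    have "(\<lambda>x y. (\<delta> x y * a x y) * one x y) = (\<lambda>x y. \<delta> x y * a x y)" by (simp add: one_def)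
    with e1 e2 have e: "\<And>x y. \<delta> x y * \<phi> a x y = \<delta> x y * a x y * \<phi> one x y"
      by (metis (no_types, lifting))
    have paR: "\<phi> a \<in> R2" using hom(1)[OF \<phi> a] Cchar by auto
    have poR: "\<phi> one \<in> R2" using hom(1)[OF \<phi> oneA] Cchar by auto
    have DR: "(\<lambda>x y. \<phi> a x y - a x y * \<phi> one x y) \<in> R2"
      by (rule R2_diff[OF paR R2_mult[OF aR poR]])
    have "\<And>x y. \<delta> x y * (\<phi> a x y - a x y * \<phi> one x y) = 0"
      using e by (simp add: algebra_simps)
    from R2_domain[OF \<delta>R DR this \<delta>nz] show ?thesis by (simp add: fun_eq_iff)
  qed
  have S_iff: "g \<in> S \<longleftrightarrow> (\<forall>a\<in>?L. \<forall>i<2 * \<nu> a. coeff (Qof a g) i = 0)" if gC: "g \<in> C" for g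
  proof -
    have gR: "g \<in> R2" and gc: "\<forall>a\<in>?L. \<forall>i. odd i \<and> i < 2 * m \<longrightarrow> coeff (Qof a g) i = 0"
      using gC Cchar by auto
    have "(\<forall>j<\<nu> a. \<forall>r. phi_deriv g (2 * j) a r = 0) \<longleftrightarrow> (\<forall>i<2 * \<nu> a. coeff (Qof a g) i = 0)"
      if a: "a \<in> ?L" for a
      by (rule SC[OF gR]) (use gc a in \<open>auto simp: \<nu>_def\<close>)
    then show ?thesis unfolding S_def using gC by auto
  qed
  have H2: "(\<lambda>x y. a x y * g x y) \<in> C" if gS: "g \<in> S" and aA: "a \<in> A" for g a
  proof -
    have gC: "g \<in> C" using gS unfolding S_def by auto
    have gR: "g \<in> R2" and gc: "\<forall>a\<in>?L. \<forall>i. odd i \<and> i < 2 * m \<longrightarrow> coeff (Qof a g) i = 0"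
      using gC Cchar by auto
    have aR: "a \<in> R2" and ac: "\<forall>b\<in>?L. \<forall>i. odd i \<and> i < 2 * \<mu> b \<longrightarrow> coeff (Qof b a) i = 0"
      using aA Achar by auto
    have gz: "\<forall>b\<in>?L. \<forall>i<2 * \<nu> b. coeff (Qof b g) i = 0" using gS S_iff[OF gC] by auto
    show ?thesis unfolding Cchar
    proof (intro conjI ballI allI impI)
      show "(\<lambda>x y. a x y * g x y) \<in> R2" by (rule R2_mult[OF aR gR])
    next
      fix b i assume b: "b \<in> ?L" and i: "odd i \<and> i < 2 * m"
      show "coeff (Qof b (\<lambda>x y. a x y * g x y)) i = 0"
        unfolding Qof_mult[OF aR gR]
        by (rule cond_mult2[where nu="\<nu> b" and m=m and mu="\<mu> b"])
           (use gz gc ac b i msum[OF b] in auto)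
    qed
  qed
  have H1: "g \<in> S" if gC: "g \<in> C" and ga: "\<forall>a\<in>A. (\<lambda>x y. a x y * g x y) \<in> C" for g
  proof -
    have gR: "g \<in> R2" and gc: "\<forall>a\<in>?L. \<forall>i. odd i \<and> i < 2 * m \<longrightarrow> coeff (Qof a g) i = 0"
      using gC Cchar by auto
    have "\<forall>i<2 * \<nu> \<alpha>. coeff (Qof \<alpha> g) i = 0" if \<alpha>: "\<alpha> \<in> ?L" for \<alpha>
    proof (rule ccontr)
      assume "\<not> (\<forall>i<2 * \<nu> \<alpha>. coeff (Qof \<alpha> g) i = 0)"
      then have "\<exists>i. i < 2 * \<nu> \<alpha> \<and> coeff (Qof \<alpha> g) i \<noteq> 0" by auto
      then obtain i0 where i0: "i0 < 2 * \<nu> \<alpha>" "coeff (Qof \<alpha> g) i0 \<noteq> 0"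
        and least: "\<And>j. j < i0 \<Longrightarrow> \<not> (j < 2 * \<nu> \<alpha> \<and> coeff (Qof \<alpha> g) j \<noteq> 0)"
        using exists_least_iff[of "\<lambda>i. i < 2 * \<nu> \<alpha> \<and> coeff (Qof \<alpha> g) i \<noteq> 0"] by blast
      have low: "\<forall>j<i0. coeff (Qof \<alpha> g) j = 0" using least i0 by auto
      have nule: "\<nu> \<alpha> \<le> m" unfolding \<nu>_def by simp
      have ev: "even i0"
      proof (rule ccontr)
        assume "\<not> even i0"
        then show False using gc \<alpha> i0 nule by auto
      qed
      define e where "e = 2 * \<mu> \<alpha> + 1"
      define P where "P = (\<lambda>x y. \<Prod>g\<in>?L - {\<alpha>}. lform g x y ^ (2 * m + 2))"
      define a where "a = (\<lambda>x y. lform \<alpha> x y ^ e * P x y)"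
      have PR: "P \<in> R2" unfolding P_def by (rule lpowprod_R2) (use finL in simp)
      have aR: "a \<in> R2" unfolding a_def by (rule R2_mult[OF lpow_R2 PR])
      have aA: "a \<in> A" unfolding Achar
      proof (intro conjI ballI allI impI)
        show "a \<in> R2" by (rule aR)
      next
        fix b i assume b: "b \<in> ?L" and i: "odd i \<and> i < 2 * \<mu> b"
        show "coeff (Qof b a) i = 0"
        proof (cases "b = \<alpha>")
          case True
          have "\<forall>i<e. coeff (Qof b a) i = 0" using lpow_zero[OF PR, of a b e] True by (simp add: a_def)
          then show ?thesis using i True by (auto simp: e_def)
        next
          case False
          define h where "h = (\<lambda>x y. lform \<alpha> x y ^ e * (\<Prod>g\<in>?L - {\<alpha>} - {b}. lform g x y ^ (2 * m + 2)))"
          have hR: "h \<in> R2" unfolding h_def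
            by (rule R2_mult[OF lpow_R2 lpowprod_R2]) (use finL in simp)
          have bL: "b \<in> ?L - {\<alpha>}" using b False by simp
          have "a x y = lform b x y ^ (2 * m + 2) * h x y" for x y
            unfolding a_def P_def h_def
            by (simp add: prod.remove[OF _ bL] finL mult.assoc mult.left_commute)
          from lpow_zero[OF hR this] have "\<forall>i<2 * m + 2. coeff (Qof b a) i = 0" .
          moreover have "i < 2 * m + 2" using i mule[OF b] by linarith
          ultimately show ?thesis by auto
        qed
      qed
      have QA: "Qof \<alpha> a = monom 1 e * Qof \<alpha> P" unfolding a_def by (rule Qof_lpow[OF PR])
      have QAlow: "\<forall>j<e. coeff (Qof \<alpha> a) j = 0" unfolding QA by (simp add: coeff_monom_mult)
      have "poly (coeff (Qof \<alpha> P) 0) 1 = P (cos \<alpha> * 1 - sin \<alpha> * 0) (sin \<alpha> * 1 + cos \<alpha> * 0)"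
        by (simp only: ev0_at0[symmetric] Qof[OF PR])
      also have "\<dots> = (\<Prod>g\<in>?L - {\<alpha>}. sin (\<alpha> - g) ^ (2 * m + 2))"
        unfolding P_def by (simp add: lform_cs)
      also have "\<dots> \<noteq> 0" using finL Lambda_sin[OF \<alpha>] by (auto simp: prod_zero_iff)
      finally have "coeff (Qof \<alpha> P) 0 \<noteq> 0" by auto
      then have c0: "coeff (Qof \<alpha> a) e \<noteq> 0" unfolding QA by (simp add: coeff_monom_mult)
      have "coeff (Qof \<alpha> a * Qof \<alpha> g) (e + i0) = coeff (Qof \<alpha> a) e * coeff (Qof \<alpha> g) i0"
        by (rule coeff_lowest[OF QAlow low])
      also have "\<dots> \<noteq> 0" using c0 i0(2) by simp
      finally have nz: "coeff (Qof \<alpha> (\<lambda>x y. a x y * g x y)) (e + i0) \<noteq> 0"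
        unfolding Qof_mult[OF aR gR] .
      have agC: "(\<lambda>x y. a x y * g x y) \<in> C" using ga aA by auto
      have "odd (e + i0)" using ev by (simp add: e_def)
      moreover have "e + i0 < 2 * m" using i0(1) ev msum[OF \<alpha>] unfolding e_def by presburger
      ultimately have "coeff (Qof \<alpha> (\<lambda>x y. a x y * g x y)) (e + i0) = 0"
        using agC \<alpha> Cchar by auto
      with nz show False by simp
    qed
    then show ?thesis using S_iff[OF gC] by auto
  qed
  define \<Phi> where "\<Phi> = (\<lambda>\<phi>::bipoly \<Rightarrow> bipoly. \<phi> one)"
  have inj: "inj_on \<Phi> \<Omega>"
  proof (rule inj_onI)
    fix \<phi> \<psi> assume \<phi>: "\<phi> \<in> \<Omega>" and \<psi>: "\<psi> \<in> \<Omega>" and eq: "\<Phi> \<phi> = \<Phi> \<psi>"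
    show "\<phi> = \<psi>"
    proof (rule ext)
      fix a show "\<phi> a = \<psi> a"
      proof (cases "a \<in> A")
        case True then show ?thesis using \<Omega>char[OF \<phi> True] \<Omega>char[OF \<psi> True] eq by (simp add: \<Phi>_def)
      next
        case False then show ?thesis using \<phi> \<psi> unfolding \<Omega>_def HomC_def by auto
      qed
    qed
  qed
  have img1: "\<Phi> ` \<Omega> \<subseteq> S"
  proof
    fix g assume "g \<in> \<Phi> ` \<Omega>"
    then obtain \<phi> where \<phi>: "\<phi> \<in> \<Omega>" and g: "g = \<phi> one" by (auto simp: \<Phi>_def)
    have gC: "g \<in> C" using hom(1)[OF \<phi> oneA] g by simp
    have "\<forall>a\<in>A. (\<lambda>x y. a x y * g x y) \<in> C"
      using \<Omega>char[OF \<phi>] hom(1)[OF \<phi>] g by auto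
    then show "g \<in> S" using H1[OF gC] by simp
  qed
  have img2: "S \<subseteq> \<Phi> ` \<Omega>"
  proof
    fix g assume gS: "g \<in> S"
    define \<psi> where "\<psi> = (\<lambda>a::bipoly. if a \<in> A then (\<lambda>x y. a x y * g x y) else (\<lambda>x y. 0))"
    have "\<psi> \<in> \<Omega>" unfolding \<Omega>_def HomC_def
    proof (intro CollectI conjI ballI allI impI)
      fix a assume "a \<in> A" then show "\<psi> a \<in> C" using H2[OF gS] by (simp add: \<psi>_def)
    next
      fix a b assume a: "a \<in> A" and b: "b \<in> A"
      show "\<psi> (\<lambda>z1 z2. a z1 z2 + b z1 z2) = (\<lambda>z1 z2. \<psi> a z1 z2 + \<psi> b z1 z2)"
        using a b Aadd[OF a b] by (simp add: \<psi>_def algebra_simps)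
    next
      fix c a assume c: "c \<in> C" and a: "a \<in> A"
      show "\<psi> (\<lambda>z1 z2. c z1 z2 * a z1 z2) = (\<lambda>z1 z2. c z1 z2 * \<psi> a z1 z2)"
        using a Amult[OF CA[OF c] a] by (simp add: \<psi>_def algebra_simps)
    next
      fix a assume "a \<notin> A" then show "\<psi> a = (\<lambda>z1 z2. 0)" by (simp add: \<psi>_def)
    qed
    moreover have "\<Phi> \<psi> = g" using oneA by (simp add: \<Phi>_def \<psi>_def one_def)
    ultimately show "g \<in> \<Phi> ` \<Omega>" by (metis imageI)
  qed
  have "bij_betw \<Phi> \<Omega> S" unfolding bij_betw_def using inj img1 img2 by auto
  moreover have "\<forall>\<phi>\<in>\<Omega>. \<forall>\<psi>\<in>\<Omega>. \<Phi> (\<lambda>a z1 z2. \<phi> a z1 z2 + \<psi> a z1 z2)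
                          = (\<lambda>z1 z2. \<Phi> \<phi> z1 z2 + \<Phi> \<psi> z1 z2)" by (simp add: \<Phi>_def)
  moreover have "\<forall>c\<in>C. \<forall>\<phi>\<in>\<Omega>. \<Phi> (\<lambda>a z1 z2. c z1 z2 * \<phi> a z1 z2)
                          = (\<lambda>z1 z2. c z1 z2 * \<Phi> \<phi> z1 z2)" by (simp add: \<Phi>_def)
  ultimately show ?thesis by blast
qed

end
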